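(* Let $X$ be a locally compact locale with frame presentation $\mathcal{O}X=\langle G\mid R\rangle$, let $\mathrm{ev}\colon\Sigma^X\times X\to\Sigma$ be the evaluation map of the exponential $\Sigma^X$, let $\widetilde{\mathrm{ev}}=\mathrm{ev}_{\Sigma^G}\circ(\Sigma^{\Sigma^G}\times i_X)\colon\Sigma^{\Sigma^G}\times X\to\Sigma$, and let $q\colon\Sigma^{\Sigma^G}\to\Sigma^X$ be the unique locale map with $\mathrm{ev}\circ(q\times X)=\widetilde{\mathrm{ev}}$ (equivalently $q=\Sigma^{i_X}$). Then there is a locale map $s\colon\Sigma^X\to\Sigma^{\Sigma^G}$ with $q\circ s=\mathrm{id}_{\Sigma^X}$ and $\widetilde{\mathrm{ev}}\circ(s\times X)=\mathrm{ev}$.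
   Context: A frame is a complete lattice in which finite meets distribute over arbitrary joins; a locale $X$ is formally a frame $\mathcal{O}X$, and a locale map $f\colon X\to Y$ is a frame homomorphism $f^*\colon\mathcal{O}Y\to\mathcal{O}X$. $\Sigma$ is the Sierpiński locale (frame = free frame on one generator). For a set $G$, $\Sigma^G$ is the locale whose frame is the free frame on $G$; it is locally compact, so $\Sigma^{\Sigma^G}$ exists, with evaluation map $\mathrm{ev}_{\Sigma^G}\colon\Sigma^{\Sigma^G}\times\Sigma^G\to\Sigma$. A presentation $\mathcal{O}X=\langle G\mid R\rangle$ means $\mathcal{O}X$ is the quotient of the free frame on $G$ by the congruence generated by the relations $R$; the quotient map is $i_X^*$ for a sublocale inclusion $i_X\colon X\hookrightarrow\Sigma^G$. Since $X$ is locally compact, the exponential $\Sigma^X$ exists. *)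

theory Defs
  imports Main
begin

text \<open>Frames are represented concretely as families of sets ordered by inclusion
(every frame is isomorphic to such a family, e.g. via principal down-sets):
binary meets are intersections, the top is the union of the family, and joins
are least upper bounds with respect to inclusion.  A locale map f : X \<rightarrow> Y is
represented by its frame homomorphism f* : OY \<rightarrow> OX.\<close>

definition frame_join :: "'a set set \<Rightarrow> 'a set set \<Rightarrow> 'a set" where
  "frame_join A S = \<Inter>{c \<in> A. \<Union>S \<subseteq> c}"

definition is_frame :: "'a set set \<Rightarrow> bool" where
  "is_frame A \<longleftrightarrow> \<Union>A \<in> A
     \<and> (\<forall>a\<in>A. \<forall>b\<in>A. a \<inter> b \<in> A)
     \<and> (\<forall>S\<subseteq>A. frame_join A S \<in> A)
     \<and> (\<forall>a\<in>A. \<forall>S\<subseteq>A. a \<inter> frame_join A S = frame_join A ((\<inter>) a ` S))"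

definition frame_hom :: "'a set set \<Rightarrow> 'b set set \<Rightarrow> ('a set \<Rightarrow> 'b set) \<Rightarrow> bool" where
  "frame_hom A B h \<longleftrightarrow> (\<forall>a\<in>A. h a \<in> B)
     \<and> h (\<Union>A) = \<Union>B
     \<and> (\<forall>a\<in>A. \<forall>b\<in>A. h (a \<inter> b) = h a \<inter> h b)
     \<and> (\<forall>S\<subseteq>A. h (frame_join A S) = frame_join B (h ` S))"

definition frame_congruence :: "'a set set \<Rightarrow> ('a set \<times> 'a set) set \<Rightarrow> bool" where
  "frame_congruence A \<theta> \<longleftrightarrow> \<theta> \<subseteq> A \<times> A
     \<and> (\<forall>a\<in>A. (a, a) \<in> \<theta>)
     \<and> (\<forall>a b. (a, b) \<in> \<theta> \<longrightarrow> (b, a) \<in> \<theta>)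
     \<and> (\<forall>a b c. (a, b) \<in> \<theta> \<longrightarrow> (b, c) \<in> \<theta> \<longrightarrow> (a, c) \<in> \<theta>)
     \<and> (\<forall>a b c d. (a, b) \<in> \<theta> \<longrightarrow> (c, d) \<in> \<theta> \<longrightarrow> (a \<inter> c, b \<inter> d) \<in> \<theta>)
     \<and> (\<forall>P\<subseteq>\<theta>. (frame_join A (fst ` P), frame_join A (snd ` P)) \<in> \<theta>)"

text \<open>Free frame on a set G: upward closed families of finite subsets of G
(down-sets of the free meet-semilattice on G).  The Sierpinski locale has the free frame on one generator.\<close>

definition fin_subsets :: "'g set \<Rightarrow> 'g set set" where
  "fin_subsets G = {K. finite K \<and> K \<subseteq> G}"

definition free_frame :: "'g set \<Rightarrow> 'g set set set" where
  "free_frame G = {U. U \<subseteq> fin_subsets G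
      \<and> (\<forall>K\<in>U. \<forall>K'\<in>fin_subsets G. K \<subseteq> K' \<longrightarrow> K' \<in> U)}"

definition free_gen :: "'g set \<Rightarrow> 'g \<Rightarrow> 'g set set" where
  "free_gen G g = {K \<in> fin_subsets G. g \<in> K}"

abbreviation Sierpinski_frame :: "unit set set set" where
  "Sierpinski_frame \<equiv> free_frame (UNIV :: unit set)"

definition free_ext :: "'b set set \<Rightarrow> ('g \<Rightarrow> 'b set) \<Rightarrow> 'g set set \<Rightarrow> 'b set" where
  "free_ext B \<phi> U = frame_join B {\<Inter>(\<phi> ` K) \<inter> \<Union>B | K. K \<in> U}"

text \<open>Presentations: OX = < G | R > via the surjective quotient map iX (= i_X*),
whose kernel is the frame congruence generated by R.\<close>

definition presents ::
  "'g set \<Rightarrow> ('g set set \<times> 'g set set) set \<Rightarrow> 'x set set \<Rightarrow> ('g set set \<Rightarrow> 'x set) \<Rightarrow> bool" where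
  "presents G R OX iX \<longleftrightarrow> is_frame OX
     \<and> R \<subseteq> free_frame G \<times> free_frame G
     \<and> frame_hom (free_frame G) OX iX
     \<and> iX ` free_frame G = OX
     \<and> {(a, b). a \<in> free_frame G \<and> b \<in> free_frame G \<and> iX a = iX b}
         = \<Inter>{\<theta>. frame_congruence (free_frame G) \<theta> \<and> R \<subseteq> \<theta>}"

definition way_below :: "'a set set \<Rightarrow> 'a set \<Rightarrow> 'a set \<Rightarrow> bool" where
  "way_below A a b \<longleftrightarrow> (\<forall>S\<subseteq>A. b \<subseteq> frame_join A S \<longrightarrow>
      (\<exists>S'\<subseteq>S. finite S' \<and> a \<subseteq> frame_join A S'))"

definition locally_compact :: "'a set set \<Rightarrow> bool" where
  "locally_compact A \<longleftrightarrow> (\<forall>b\<in>A. b = frame_join A {a \<in> A. way_below A a b})"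

definition directed_in :: "'a set set \<Rightarrow> 'a set set \<Rightarrow> bool" where
  "directed_in A D \<longleftrightarrow> D \<subseteq> A \<and> D \<noteq> {} \<and> (\<forall>x\<in>D. \<forall>y\<in>D. \<exists>z\<in>D. x \<subseteq> z \<and> y \<subseteq> z)"

definition scott_open :: "'a set set \<Rightarrow> 'a set set \<Rightarrow> bool" where
  "scott_open A U \<longleftrightarrow> U \<subseteq> A
     \<and> (\<forall>a\<in>U. \<forall>b\<in>A. a \<subseteq> b \<longrightarrow> b \<in> U)
     \<and> (\<forall>D. directed_in A D \<longrightarrow> frame_join A D \<in> U \<longrightarrow> D \<inter> U \<noteq> {})"

definition scott_frame :: "'a set set \<Rightarrow> 'a set set set" where
  "scott_frame A = {U. scott_open A U}"

text \<open>Binary products of locales: the frame of Y \<times> X is the tensor product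
OY \<otimes> OX, realised as the frame of C-ideals.\<close>

definition C_ideal :: "'a set set \<Rightarrow> 'b set set \<Rightarrow> ('a set \<times> 'b set) set \<Rightarrow> bool" where
  "C_ideal A B D \<longleftrightarrow> D \<subseteq> A \<times> B
     \<and> (\<forall>a b a' b'. (a, b) \<in> D \<longrightarrow> a' \<in> A \<longrightarrow> b' \<in> B \<longrightarrow> a' \<subseteq> a \<longrightarrow> b' \<subseteq> b \<longrightarrow> (a', b') \<in> D)
     \<and> (\<forall>S\<subseteq>A. \<forall>b\<in>B. (\<forall>a\<in>S. (a, b) \<in> D) \<longrightarrow> (frame_join A S, b) \<in> D)
     \<and> (\<forall>S\<subseteq>B. \<forall>a\<in>A. (\<forall>b\<in>S. (a, b) \<in> D) \<longrightarrow> (a, frame_join B S) \<in> D)"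

definition tensor :: "'a set set \<Rightarrow> 'b set set \<Rightarrow> ('a set \<times> 'b set) set set" where
  "tensor A B = {D. C_ideal A B D}"

definition tens :: "'a set set \<Rightarrow> 'b set set \<Rightarrow> 'a set \<Rightarrow> 'b set \<Rightarrow> ('a set \<times> 'b set) set" where
  "tens A B u v = \<Inter>{D \<in> tensor A B. (u, v) \<in> D}"

text \<open>Product of locale maps f \<times> g : Y \<times> X \<rightarrow> Y' \<times> X', given the frame homs
f : OY' \<rightarrow> OY and g : OX' \<rightarrow> OX; the result is the frame hom
OY' \<otimes> OX' \<rightarrow> OY \<otimes> OX sending u \<otimes> v to f u \<otimes> g v.\<close>

definition prod_hom ::
  "'a set set \<Rightarrow> 'b set set \<Rightarrow> ('c set \<Rightarrow> 'a set) \<Rightarrow> ('d set \<Rightarrow> 'b set)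
     \<Rightarrow> ('c set \<times> 'd set) set \<Rightarrow> ('a set \<times> 'b set) set" where
  "prod_hom A B f g D = frame_join (tensor A B) {tens A B (f u) (g v) | u v. (u, v) \<in> D}"

text \<open>Exponential \<Sigma>^X of a locally compact locale X: its frame is the Scott
topology of OX, and the evaluation map ev : \<Sigma>^X \<times> X \<rightarrow> \<Sigma> sends the generator of
O\<Sigma> to the join over a \<in> OX of {u. a \<ll> u} \<otimes> a.\<close>

definition ev_elem :: "'a set set \<Rightarrow> ('a set set \<times> 'a set) set" where
  "ev_elem A = frame_join (tensor (scott_frame A) A)
      {tens (scott_frame A) A {u \<in> A. way_below A a u} a | a. a \<in> A}"

definition ev_hom :: "'a set set \<Rightarrow> unit set set \<Rightarrow> ('a set set \<times> 'a set) set" where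
  "ev_hom A = free_ext (tensor (scott_frame A) A) (\<lambda>_. ev_elem A)"

end

theory Submission
  imports Defs
begin

lemma fj_upper: "\<Union>S \<subseteq> frame_join A S"
  unfolding frame_join_def by blast
lemma fj_least: "c \<in> A \<Longrightarrow> \<Union>S \<subseteq> c \<Longrightarrow> frame_join A S \<subseteq> c"
  unfolding frame_join_def by blast
lemma fj_eq_Union: "\<Union>S \<in> A \<Longrightarrow> frame_join A S = \<Union>S"
  using fj_upper fj_least by (metis subset_antisym subset_refl)
lemma fj_in: "is_frame A \<Longrightarrow> S \<subseteq> A \<Longrightarrow> frame_join A S \<in> A"
  unfolding is_frame_def by blast


lemma fj_mono: "is_frame A \<Longrightarrow> S1 \<subseteq> S2 \<Longrightarrow> S2 \<subseteq> A \<Longrightarrow> frame_join A S1 \<subseteq> frame_join A S2"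
  by (meson Sup_subset_mono fj_in fj_least fj_upper order_trans)


lemma wbD: "way_below A a u \<Longrightarrow> S \<subseteq> A \<Longrightarrow> u \<subseteq> frame_join A S \<Longrightarrow> \<exists>S'. S'\<subseteq>S \<and> finite S' \<and> a \<subseteq> frame_join A S'"
  unfolding way_below_def by (drule spec[of _ S]) simp
lemma wbI: "(\<And>S. S \<subseteq> A \<Longrightarrow> u \<subseteq> frame_join A S \<Longrightarrow> \<exists>S'. S'\<subseteq>S \<and> finite S' \<and> a \<subseteq> frame_join A S') \<Longrightarrow> way_below A a u"
  unfolding way_below_def by simp


lemma wb_le: "way_below A a u \<Longrightarrow> u \<in> A \<Longrightarrow> a \<subseteq> u"
proof -
  assume w: "way_below A a u" and u: "u \<in> A"
  have 1: "u \<subseteq> frame_join A {u}" using fj_upper[of "{u}" A] by simp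
  have 2: "{u} \<subseteq> A" using u by simp
  obtain S' where S': "S' \<subseteq> {u}" "a \<subseteq> frame_join A S'"
    using wbD[OF w 2 1] by blast
  have "frame_join A S' \<subseteq> u" using S'(1) u by (intro fj_least) auto
  with S'(2) show ?thesis by (rule order_trans)
qed


lemma wb_mono_right: "way_below A a u \<Longrightarrow> u \<subseteq> u' \<Longrightarrow> way_below A a u'"
proof (rule wbI)
  fix S assume w: "way_below A a u" and uu: "u \<subseteq> u'" and SA: "S \<subseteq> A" and u': "u' \<subseteq> frame_join A S"
  from uu u' have "u \<subseteq> frame_join A S" by (rule order_trans)
  from wbD[OF w SA this] show "\<exists>S'. S'\<subseteq>S \<and> finite S' \<and> a \<subseteq> frame_join A S'" .
qed
lemma wb_mono_left: "a' \<subseteq> a \<Longrightarrow> way_below A a u \<Longrightarrow> way_below A a' u"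
proof (rule wbI)
  fix S assume aa: "a' \<subseteq> a" and w: "way_below A a u" and SA: "S \<subseteq> A" and u: "u \<subseteq> frame_join A S"
  from wbD[OF w SA u] obtain S' where S': "S'\<subseteq>S" "finite S'" "a \<subseteq> frame_join A S'" by blast
  from aa S'(3) have "a' \<subseteq> frame_join A S'" by (rule order_trans)
  with S' show "\<exists>S'. S'\<subseteq>S \<and> finite S' \<and> a' \<subseteq> frame_join A S'" by blast
qed
lemma directed_fin_ub:
  assumes D: "directed_in A D" and "finite F" "F \<subseteq> D"
  shows "\<exists>d\<in>D. \<forall>f\<in>F. f \<subseteq> d"
  using assms(2,3)
proof (induction F rule: finite_induct)
  case empty
  have "D \<noteq> {}" using D unfolding directed_in_def by simp
  then show ?case by blast
next
  case (insert x F)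
  then obtain d where d: "d \<in> D" "\<forall>f\<in>F. f \<subseteq> d" by auto
  have "x \<in> D" using insert.prems by simp
  have "\<forall>x\<in>D. \<forall>y\<in>D. \<exists>z\<in>D. x \<subseteq> z \<and> y \<subseteq> z" using D unfolding directed_in_def by simp
  then obtain z where "z \<in> D" "x \<subseteq> z" "d \<subseteq> z" using `x \<in> D` d(1) by blast
  with d show ?case by (intro bexI[of _ z]) auto
qed
lemma wb_fin_join:
  assumes fr: "is_frame A" and fin: "finite T" and TA: "T \<subseteq> A" and wb: "\<forall>t\<in>T. way_below A t d"
  shows "way_below A (frame_join A T) d"
proof (rule wbI)
  fix S assume SA: "S \<subseteq> A" and dS: "d \<subseteq> frame_join A S"
  have "\<forall>t\<in>T. \<exists>S'. S' \<subseteq> S \<and> finite S' \<and> t \<subseteq> frame_join A S'"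
  proof
    fix t assume "t \<in> T" then have "way_below A t d" using wb by simp
    from wbD[OF this SA dS] show "\<exists>S'. S' \<subseteq> S \<and> finite S' \<and> t \<subseteq> frame_join A S'" .
  qed
  then obtain f where f0: "\<forall>t\<in>T. f t \<subseteq> S \<and> finite (f t) \<and> t \<subseteq> frame_join A (f t)"
    by (rule bchoice[THEN exE])
  define S'' where "S'' = \<Union>(f ` T)"
  have S''S: "S'' \<subseteq> S" using f0 unfolding S''_def by auto
  have finS'': "finite S''" using f0 fin unfolding S''_def by auto
  have S''A: "S'' \<subseteq> A" using S''S SA by (rule order_trans)
  have "\<Union>T \<subseteq> frame_join A S''"
  proof
    fix x assume "x \<in> \<Union>T"
    then obtain t where t: "t \<in> T" "x \<in> t" by blast
    have ft: "f t \<subseteq> S''" using t(1) unfolding S''_def by blast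
    have "frame_join A (f t) \<subseteq> frame_join A S''" by (rule fj_mono[OF fr ft S''A])
    moreover have "t \<subseteq> frame_join A (f t)" using f0 t(1) by simp
    ultimately show "x \<in> frame_join A S''" using t(2) by blast
  qed
  then have "frame_join A T \<subseteq> frame_join A S''"
    by (rule fj_least[OF fj_in[OF fr S''A]])
  with S''S finS'' show "\<exists>S'. S'\<subseteq>S \<and> finite S' \<and> frame_join A T \<subseteq> frame_join A S'" by blast
qed


lemma scott_sub: "U \<in> scott_frame A \<Longrightarrow> U \<subseteq> A"
  unfolding scott_frame_def scott_open_def by simp

lemma scott_up: "U \<in> scott_frame A \<Longrightarrow> a \<in> U \<Longrightarrow> a \<subseteq> b \<Longrightarrow> b \<in> A \<Longrightarrow> b \<in> U"
  unfolding scott_frame_def scott_open_def by simp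

lemma scott_dir: "U \<in> scott_frame A \<Longrightarrow> directed_in A D \<Longrightarrow> frame_join A D \<in> U \<Longrightarrow> \<exists>d\<in>D. d \<in> U"
  unfolding scott_frame_def scott_open_def by auto

lemma scottI:
  assumes "U \<subseteq> A" "\<And>a b. a \<in> U \<Longrightarrow> b \<in> A \<Longrightarrow> a \<subseteq> b \<Longrightarrow> b \<in> U"
    "\<And>D. directed_in A D \<Longrightarrow> frame_join A D \<in> U \<Longrightarrow> \<exists>d\<in>D. d \<in> U"
  shows "U \<in> scott_frame A"
proof -
  have "\<forall>D. directed_in A D \<longrightarrow> frame_join A D \<in> U \<longrightarrow> D \<inter> U \<noteq> {}"
  proof (intro allI impI)
    fix D assume "directed_in A D" "frame_join A D \<in> U"
    from assms(3)[OF this] show "D \<inter> U \<noteq> {}" by blast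
  qed
  then show ?thesis unfolding scott_frame_def scott_open_def using assms(1,2) by blast
qed

lemma scott_Union: "S \<subseteq> scott_frame A \<Longrightarrow> \<Union>S \<in> scott_frame A"
proof (rule scottI)
  assume S: "S \<subseteq> scott_frame A"
  show "\<Union>S \<subseteq> A" using S scott_sub by blast
  show "b \<in> \<Union>S" if H: "a \<in> \<Union>S" "b \<in> A" "a \<subseteq> b" for a b
  proof -
    obtain U where "U \<in> S" "a \<in> U" using H(1) by blast
    then show ?thesis using scott_up[of U A a b] S H by blast
  qed
  show "\<exists>d\<in>D. d \<in> \<Union>S" if H: "directed_in A D" "frame_join A D \<in> \<Union>S" for D
  proof -
    obtain U where U: "U \<in> S" "frame_join A D \<in> U" using H(2) by blast
    then have "U \<in> scott_frame A" using S by blast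
    from scott_dir[OF this H(1) U(2)] U(1) show ?thesis by blast
  qed
qed

lemma scott_join: "S \<subseteq> scott_frame A \<Longrightarrow> frame_join (scott_frame A) S = \<Union>S"
  by (rule fj_eq_Union, rule scott_Union)

lemma scott_Int: "U \<in> scott_frame A \<Longrightarrow> V \<in> scott_frame A \<Longrightarrow> U \<inter> V \<in> scott_frame A"
proof (rule scottI)
  assume U: "U \<in> scott_frame A" and V: "V \<in> scott_frame A"
  show "U \<inter> V \<subseteq> A" using scott_sub[OF U] by blast
  show "b \<in> U \<inter> V" if "a \<in> U \<inter> V" "b \<in> A" "a \<subseteq> b" for a b
    using scott_up[OF U _ that(3,2)] scott_up[OF V _ that(3,2)] that(1) by blast
  show "\<exists>d\<in>D. d \<in> U \<inter> V" if D: "directed_in A D" and j: "frame_join A D \<in> U \<inter> V" for D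
  proof -
    obtain d1 where d1: "d1 \<in> D" "d1 \<in> U" using scott_dir[OF U D] j by blast
    obtain d2 where d2: "d2 \<in> D" "d2 \<in> V" using scott_dir[OF V D] j by blast
    have "\<forall>x\<in>D. \<forall>y\<in>D. \<exists>z\<in>D. x \<subseteq> z \<and> y \<subseteq> z" using D unfolding directed_in_def by simp
    then obtain d where d: "d \<in> D" "d1 \<subseteq> d" "d2 \<subseteq> d" using d1(1) d2(1) by blast
    have "D \<subseteq> A" using D unfolding directed_in_def by simp
    then have "d \<in> A" using d(1) by blast
    then have "d \<in> U \<inter> V" using scott_up[OF U d1(2) d(2)] scott_up[OF V d2(2) d(3)] by blast
    with d(1) show ?thesis by blast
  qed
qed

lemma scott_top: "A \<in> scott_frame A"
proof (rule scottI)
  show "\<exists>d\<in>D. d \<in> A" if "directed_in A D" "frame_join A D \<in> A" for D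
    using that(1) unfolding directed_in_def by blast
qed auto

lemma scott_Union_all: "\<Union>(scott_frame A) = A"
  using scott_top scott_sub by blast

lemma so_fin:
  assumes fr: "is_frame A" and U: "U \<in> scott_frame A" and SA: "S \<subseteq> A" and j: "frame_join A S \<in> U"
  shows "\<exists>S'. S'\<subseteq>S \<and> finite S' \<and> frame_join A S' \<in> U"
proof -
  define D where "D = {frame_join A S' | S'. S' \<subseteq> S \<and> finite S'}"
  have dir: "directed_in A D"
    unfolding directed_in_def
  proof (intro conjI ballI)
    show "D \<subseteq> A"
    proof
      fix x assume "x \<in> D"
      then obtain S' where "x = frame_join A S'" "S' \<subseteq> S" unfolding D_def by blast
      then show "x \<in> A" using fj_in[OF fr, of S'] SA by blast
    qed
    have "frame_join A {} \<in> D" unfolding D_def by blast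
    then show "D \<noteq> {}" by blast
  next
    fix x y assume "x \<in> D" "y \<in> D"
    then obtain S1 S2 where 1: "x = frame_join A S1" "S1 \<subseteq> S" "finite S1"
      and 2: "y = frame_join A S2" "S2 \<subseteq> S" "finite S2" unfolding D_def by blast
    have A12: "S1 \<union> S2 \<subseteq> A" using 1 2 SA by blast
    have "frame_join A S1 \<subseteq> frame_join A (S1 \<union> S2)" by (rule fj_mono[OF fr _ A12]) blast
    moreover have "frame_join A S2 \<subseteq> frame_join A (S1 \<union> S2)" by (rule fj_mono[OF fr _ A12]) blast
    moreover have "frame_join A (S1 \<union> S2) \<in> D" unfolding D_def using 1 2 by blast
    ultimately show "\<exists>z\<in>D. x \<subseteq> z \<and> y \<subseteq> z" using 1 2 by blast
  qed
  have eq: "{c \<in> A. \<Union>D \<subseteq> c} = {c \<in> A. \<Union>S \<subseteq> c}"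
  proof (rule Collect_cong, rule iffI)
    fix c assume c: "c \<in> A \<and> \<Union>D \<subseteq> c"
    have "\<Union>S \<subseteq> \<Union>D"
    proof
      fix x assume "x \<in> \<Union>S" then obtain s where s: "s \<in> S" "x \<in> s" by blast
      have "s \<subseteq> frame_join A {s}" using fj_upper[of "{s}" A] by simp
      then have "x \<in> frame_join A {s}" using s(2) by blast
      moreover have "frame_join A {s} \<in> D" unfolding D_def using s(1) by blast
      ultimately show "x \<in> \<Union>D" by blast
    qed
    with c show "c \<in> A \<and> \<Union>S \<subseteq> c" by blast
  next
    fix c assume c: "c \<in> A \<and> \<Union>S \<subseteq> c"
    have "\<Union>D \<subseteq> c"
    proof
      fix x assume "x \<in> \<Union>D"
      then obtain S' where S': "S' \<subseteq> S" "x \<in> frame_join A S'" unfolding D_def by blast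
      have "\<Union>S' \<subseteq> c" using c S'(1) by blast
      then have "frame_join A S' \<subseteq> c" using c by (intro fj_least) auto
      with S'(2) show "x \<in> c" by blast
    qed
    with c show "c \<in> A \<and> \<Union>D \<subseteq> c" by blast
  qed
  have "frame_join A D = frame_join A S" unfolding frame_join_def eq ..
  with j have "frame_join A D \<in> U" by simp
  from scott_dir[OF U dir this] obtain d where "d \<in> D" "d \<in> U" by blast
  then show ?thesis unfolding D_def by blast
qed


lemma lc_join: "locally_compact A \<Longrightarrow> x \<in> A \<Longrightarrow> frame_join A {a \<in> A. way_below A a x} = x"
  unfolding locally_compact_def by simp

lemma wbset_scott:
  assumes fr: "is_frame A" and lc: "locally_compact A" and aA: "a \<in> A"
  shows "{u \<in> A. way_below A a u} \<in> scott_frame A"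
proof (rule scottI)
  show "{u \<in> A. way_below A a u} \<subseteq> A" by blast
  show "b \<in> {u \<in> A. way_below A a u}" if H: "x \<in> {u \<in> A. way_below A a u}" "b \<in> A" "x \<subseteq> b" for x b
    using wb_mono_right[of A a x b] H by blast
  show "\<exists>d\<in>D. d \<in> {u \<in> A. way_below A a u}"
    if D: "directed_in A D" and j: "frame_join A D \<in> {u \<in> A. way_below A a u}" for D
  proof -
    have DA: "D \<subseteq> A" using D unfolding directed_in_def by simp
    define T where "T = {t \<in> A. \<exists>d\<in>D. way_below A t d}"
    have TA: "T \<subseteq> A" unfolding T_def by blast
    have "\<Union>D \<subseteq> frame_join A T"
    proof
      fix x assume "x \<in> \<Union>D"
      then obtain d where d: "d \<in> D" "x \<in> d" by blast
      have dA: "d \<in> A" using d(1) DA by blast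
      have sub: "{t \<in> A. way_below A t d} \<subseteq> T" unfolding T_def using d(1) by blast
      have "frame_join A {t \<in> A. way_below A t d} \<subseteq> frame_join A T" by (rule fj_mono[OF fr sub TA])
      then have "d \<subseteq> frame_join A T" using lc_join[OF lc dA] by simp
      with d(2) show "x \<in> frame_join A T" by blast
    qed
    then have DT: "frame_join A D \<subseteq> frame_join A T" by (rule fj_least[OF fj_in[OF fr TA]])
    have wa: "way_below A a (frame_join A D)" using j by blast
    from wbD[OF wa TA DT] obtain T' where T': "T' \<subseteq> T" "finite T'" "a \<subseteq> frame_join A T'" by blast
    have "\<forall>t\<in>T'. \<exists>d. d \<in> D \<and> way_below A t d" using T'(1) unfolding T_def by blast
    then obtain g where g: "\<forall>t\<in>T'. g t \<in> D \<and> way_below A t (g t)" by (rule bchoice[THEN exE])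
    have gf: "finite (g ` T')" using T'(2) by simp
    have gD: "g ` T' \<subseteq> D" using g by blast
    from directed_fin_ub[OF D gf gD] obtain d where d: "d \<in> D" "\<forall>f\<in>g ` T'. f \<subseteq> d" by blast
    have "\<forall>t\<in>T'. way_below A t d"
    proof
      fix t assume t: "t \<in> T'"
      then have "way_below A t (g t)" "g t \<subseteq> d" using g d(2) by auto
      then show "way_below A t d" by (rule wb_mono_right)
    qed
    moreover have "T' \<subseteq> A" using T'(1) TA by blast
    ultimately have "way_below A (frame_join A T') d" using wb_fin_join[OF fr T'(2)] by blast
    then have "way_below A a d" by (rule wb_mono_left[OF T'(3)])
    moreover have "d \<in> A" using d(1) DA by blast
    ultimately show ?thesis using d(1) by blast
  qed
qed

lemma wb_directed:
  assumes fr: "is_frame A" and lc: "locally_compact A" and aA: "a \<in> A"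
    and D: "directed_in A D" and w: "way_below A a (frame_join A D)" and jA: "frame_join A D \<in> A"
  shows "\<exists>d\<in>D. way_below A a d"
proof -
  have "frame_join A D \<in> {u \<in> A. way_below A a u}" using w jA by blast
  from scott_dir[OF wbset_scott[OF fr lc aA] D this] show ?thesis by blast
qed

lemma scott_wb_ex:
  assumes fr: "is_frame A" and lc: "locally_compact A" and U: "U \<in> scott_frame A" and u: "u \<in> U"
  shows "\<exists>a\<in>U. way_below A a u"
proof -
  have uA: "u \<in> A" using u scott_sub[OF U] by blast
  define S where "S = {a \<in> A. way_below A a u}"
  have SA: "S \<subseteq> A" unfolding S_def by blast
  have "frame_join A S \<in> U" unfolding S_def using lc_join[OF lc uA] u by simp
  from so_fin[OF fr U SA this] obtain S' where S': "S' \<subseteq> S" "finite S'" "frame_join A S' \<in> U" by blast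
  have "\<forall>t\<in>S'. way_below A t u" using S'(1) unfolding S_def by blast
  moreover have "S' \<subseteq> A" using S'(1) SA by blast
  ultimately have "way_below A (frame_join A S') u" using wb_fin_join[OF fr S'(2)] by blast
  with S'(3) show ?thesis by blast
qed


lemma ff_memI: "U \<subseteq> fin_subsets G \<Longrightarrow> (\<And>K K'. K \<in> U \<Longrightarrow> K' \<in> fin_subsets G \<Longrightarrow> K \<subseteq> K' \<Longrightarrow> K' \<in> U) \<Longrightarrow> U \<in> free_frame G"
  unfolding free_frame_def by blast

lemma ff_sub: "U \<in> free_frame G \<Longrightarrow> U \<subseteq> fin_subsets G"
  unfolding free_frame_def by blast

lemma ff_up: "U \<in> free_frame G \<Longrightarrow> K \<in> U \<Longrightarrow> K' \<in> fin_subsets G \<Longrightarrow> K \<subseteq> K' \<Longrightarrow> K' \<in> U"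
  unfolding free_frame_def by blast

lemma ff_union: "S \<subseteq> free_frame G \<Longrightarrow> \<Union>S \<in> free_frame G"
proof (rule ff_memI)
  assume S: "S \<subseteq> free_frame G"
  show "\<Union>S \<subseteq> fin_subsets G" using S ff_sub by blast
  show "K' \<in> \<Union>S" if H: "K \<in> \<Union>S" "K' \<in> fin_subsets G" "K \<subseteq> K'" for K K'
  proof -
    obtain U where U: "U \<in> S" "K \<in> U" using H(1) by blast
    then have "U \<in> free_frame G" using S by blast
    from ff_up[OF this U(2) H(2,3)] U(1) show ?thesis by blast
  qed
qed

lemma ff_join: "S \<subseteq> free_frame G \<Longrightarrow> frame_join (free_frame G) S = \<Union>S"
  by (rule fj_eq_Union, rule ff_union)

lemma ff_Int: "U \<in> free_frame G \<Longrightarrow> V \<in> free_frame G \<Longrightarrow> U \<inter> V \<in> free_frame G"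
proof (rule ff_memI)
  assume U: "U \<in> free_frame G" and V: "V \<in> free_frame G"
  show "U \<inter> V \<subseteq> fin_subsets G" using ff_sub[OF U] by blast
  show "K' \<in> U \<inter> V" if H: "K \<in> U \<inter> V" "K' \<in> fin_subsets G" "K \<subseteq> K'" for K K'
    using ff_up[OF U _ H(2,3)] ff_up[OF V _ H(2,3)] H(1) by blast
qed

lemma ff_frame: "is_frame (free_frame G)"
  unfolding is_frame_def
proof (intro conjI ballI allI impI)
  show "\<Union>(free_frame G) \<in> free_frame G" by (rule ff_union) simp
  show "a \<inter> b \<in> free_frame G" if "a \<in> free_frame G" "b \<in> free_frame G" for a b
    using ff_Int that by blast
  show "frame_join (free_frame G) S \<in> free_frame G" if "S \<subseteq> free_frame G" for S
    using ff_join[OF that] ff_union[OF that] by simp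
  show "a \<inter> frame_join (free_frame G) S = frame_join (free_frame G) ((\<inter>) a ` S)"
    if a: "a \<in> free_frame G" and S: "S \<subseteq> free_frame G" for a S
  proof -
    have "(\<inter>) a ` S \<subseteq> free_frame G" using ff_Int[OF a] S by blast
    then have "frame_join (free_frame G) ((\<inter>) a ` S) = \<Union>((\<inter>) a ` S)" by (rule ff_join)
    moreover have "frame_join (free_frame G) S = \<Union>S" by (rule ff_join[OF S])
    ultimately show ?thesis by blast
  qed
qed

definition pup :: "'g set \<Rightarrow> 'g set \<Rightarrow> 'g set set" where
  "pup G K = {K' \<in> fin_subsets G. K \<subseteq> K'}"

lemma pup_ff: "pup G K \<in> free_frame G"
  by (rule ff_memI) (auto simp: pup_def)

lemma pup_wb:
  assumes b: "b \<in> free_frame G" and K: "K \<in> b"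
  shows "way_below (free_frame G) (pup G K) b"
proof (rule wbI)
  fix S assume S: "S \<subseteq> free_frame G" and bS: "b \<subseteq> frame_join (free_frame G) S"
  then have "K \<in> \<Union>S" using K ff_join[OF S] by blast
  then obtain s where s: "s \<in> S" "K \<in> s" by blast
  have sF: "s \<in> free_frame G" using s(1) S by blast
  have "pup G K \<subseteq> s" using ff_up[OF sF s(2)] unfolding pup_def by blast
  moreover have "frame_join (free_frame G) {s} = s" using ff_join[of "{s}" G] sF by simp
  ultimately show "\<exists>S'. S' \<subseteq> S \<and> finite S' \<and> pup G K \<subseteq> frame_join (free_frame G) S'"
    using s(1) by (intro exI[of _ "{s}"]) auto
qed

lemma ff_lc: "locally_compact (free_frame G)"
  unfolding locally_compact_def
proof
  fix b assume b: "b \<in> free_frame G"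
  have sub: "{a \<in> free_frame G. way_below (free_frame G) a b} \<subseteq> free_frame G" by blast
  have "\<Union>{a \<in> free_frame G. way_below (free_frame G) a b} = b"
  proof
    show "\<Union>{a \<in> free_frame G. way_below (free_frame G) a b} \<subseteq> b"
      using wb_le[of "free_frame G" _ b] b by blast
    show "b \<subseteq> \<Union>{a \<in> free_frame G. way_below (free_frame G) a b}"
    proof
      fix K assume K: "K \<in> b"
      have "K \<in> fin_subsets G" using ff_sub[OF b] K by blast
      then have "K \<in> pup G K" unfolding pup_def by blast
      with pup_ff pup_wb[OF b K] show "K \<in> \<Union>{a \<in> free_frame G. way_below (free_frame G) a b}" by blast
    qed
  qed
  then show "b = frame_join (free_frame G) {a \<in> free_frame G. way_below (free_frame G) a b}"
    using ff_join[OF sub] by simp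
qed


lemma ci_sub: "C_ideal A B D \<Longrightarrow> D \<subseteq> A \<times> B"
  unfolding C_ideal_def by simp
lemma ci_down:
  assumes C: "C_ideal A B D" and h: "(a, b) \<in> D" "a' \<in> A" "b' \<in> B" "a' \<subseteq> a" "b' \<subseteq> b"
  shows "(a', b') \<in> D"
proof -
  have H: "\<forall>a b a' b'. (a, b) \<in> D \<longrightarrow> a' \<in> A \<longrightarrow> b' \<in> B \<longrightarrow> a' \<subseteq> a \<longrightarrow> b' \<subseteq> b \<longrightarrow> (a', b') \<in> D"
    using C unfolding C_ideal_def by (elim conjE) assumption
  show ?thesis by (rule H[rule_format, OF h])
qed
lemma ci_joinL:
  assumes C: "C_ideal A B D" and h: "S \<subseteq> A" "b \<in> B" "\<forall>a\<in>S. (a, b) \<in> D"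
  shows "(frame_join A S, b) \<in> D"
proof -
  have H: "\<forall>S\<subseteq>A. \<forall>b\<in>B. (\<forall>a\<in>S. (a, b) \<in> D) \<longrightarrow> (frame_join A S, b) \<in> D"
    using C unfolding C_ideal_def by (elim conjE) assumption
  show ?thesis by (rule H[rule_format, OF h(1,2)]) (use h(3) in blast)
qed
lemma ci_joinR:
  assumes C: "C_ideal A B D" and h: "S \<subseteq> B" "a \<in> A" "\<forall>b\<in>S. (a, b) \<in> D"
  shows "(a, frame_join B S) \<in> D"
proof -
  have H: "\<forall>S\<subseteq>B. \<forall>a\<in>A. (\<forall>b\<in>S. (a, b) \<in> D) \<longrightarrow> (a, frame_join B S) \<in> D"
    using C unfolding C_ideal_def by (elim conjE) assumption
  show ?thesis by (rule H[rule_format, OF h(1,2)]) (use h(3) in blast)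
qed
lemma C_idealI:
  assumes 1: "D \<subseteq> A \<times> B"
    and 2: "\<And>a b a' b'. (a, b) \<in> D \<Longrightarrow> a' \<in> A \<Longrightarrow> b' \<in> B \<Longrightarrow> a' \<subseteq> a \<Longrightarrow> b' \<subseteq> b \<Longrightarrow> (a', b') \<in> D"
    and 3: "\<And>S b. S \<subseteq> A \<Longrightarrow> b \<in> B \<Longrightarrow> (\<forall>a\<in>S. (a, b) \<in> D) \<Longrightarrow> (frame_join A S, b) \<in> D"
    and 4: "\<And>S a. S \<subseteq> B \<Longrightarrow> a \<in> A \<Longrightarrow> (\<forall>b\<in>S. (a, b) \<in> D) \<Longrightarrow> (a, frame_join B S) \<in> D"
  shows "C_ideal A B D"
  unfolding C_ideal_def
  apply (intro conjI allI impI ballI)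
      apply (rule 1)
     apply (erule (4) 2)
    apply (rule 3; blast)
  apply (rule 4; blast)
  done

lemma tensor_iff: "D \<in> tensor A B \<longleftrightarrow> C_ideal A B D"
  unfolding tensor_def by simp

lemma tens_mem: "(u, v) \<in> tens A B u v"
  unfolding tens_def by blast

lemma tens_le: "D \<in> tensor A B \<Longrightarrow> (u, v) \<in> D \<Longrightarrow> tens A B u v \<subseteq> D"
  unfolding tens_def by blast

lemma C_ideal_Inter:
  assumes ne: "F \<noteq> {}" and all: "\<forall>D\<in>F. C_ideal A B D"
  shows "C_ideal A B (\<Inter>F)"
proof (rule C_idealI)
  obtain D0 where D0: "D0 \<in> F" using ne by blast
  show "\<Inter>F \<subseteq> A \<times> B" using ci_sub all D0 by blast
  show "(a', b') \<in> \<Inter>F" if H: "(a, b) \<in> \<Inter>F" "a' \<in> A" "b' \<in> B" "a' \<subseteq> a" "b' \<subseteq> b" for a b a' b'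
  proof
    fix D assume "D \<in> F"
    then show "(a', b') \<in> D" using ci_down[of A B D a b a' b'] all H by blast
  qed
  show "(frame_join A S, b) \<in> \<Inter>F" if H: "S \<subseteq> A" "b \<in> B" "\<forall>a\<in>S. (a, b) \<in> \<Inter>F" for S b
  proof
    fix D assume "D \<in> F"
    then show "(frame_join A S, b) \<in> D" using ci_joinL[of A B D S b] all H by blast
  qed
  show "(a, frame_join B S) \<in> \<Inter>F" if H: "S \<subseteq> B" "a \<in> A" "\<forall>b\<in>S. (a, b) \<in> \<Inter>F" for S a
  proof
    fix D assume "D \<in> F"
    then show "(a, frame_join B S) \<in> D" using ci_joinR[of A B D S a] all H by blast
  qed
qed

lemma prod_full:
  assumes "\<forall>S\<subseteq>A. frame_join A S \<in> A" "\<forall>S\<subseteq>B. frame_join B S \<in> B"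
  shows "C_ideal A B (A \<times> B)"
proof (rule C_idealI)
  show "(frame_join A S, b) \<in> A \<times> B" if "S \<subseteq> A" "b \<in> B" "\<forall>a\<in>S. (a, b) \<in> A \<times> B" for S b
    using assms(1) that(1,2) by blast
  show "(a, frame_join B S) \<in> A \<times> B" if "S \<subseteq> B" "a \<in> A" "\<forall>b\<in>S. (a, b) \<in> A \<times> B" for S a
    using assms(2) that(1,2) by blast
qed auto

lemma fjT_in:
  assumes full: "C_ideal A B (A \<times> B)" and S: "\<Union>S \<subseteq> A \<times> B"
  shows "frame_join (tensor A B) S \<in> tensor A B"
proof -
  let ?F = "{c \<in> tensor A B. \<Union>S \<subseteq> c}"
  have "A \<times> B \<in> ?F" using full S tensor_iff by blast
  then have "?F \<noteq> {}" by blast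
  moreover have "\<forall>D\<in>?F. C_ideal A B D" using tensor_iff by blast
  ultimately have "C_ideal A B (\<Inter>?F)" by (rule C_ideal_Inter)
  then show ?thesis unfolding frame_join_def tensor_iff .
qed

lemma prod_gen: "(u, v) \<in> D \<Longrightarrow> (f u, g v) \<in> prod_hom A B f g D"
proof -
  assume uv: "(u, v) \<in> D"
  have "tens A B (f u) (g v) \<in> {tens A B (f u) (g v) | u v. (u, v) \<in> D}" using uv by blast
  then have "tens A B (f u) (g v) \<subseteq> \<Union>{tens A B (f u) (g v) | u v. (u, v) \<in> D}" by blast
  also have "\<dots> \<subseteq> prod_hom A B f g D" unfolding prod_hom_def by (rule fj_upper)
  finally show ?thesis using tens_mem by blast
qed

lemma prod_le:
  assumes F: "F \<in> tensor A B" and H: "\<forall>(u, v)\<in>D. (f u, g v) \<in> F"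
  shows "prod_hom A B f g D \<subseteq> F"
  unfolding prod_hom_def
proof (rule fj_least[OF F])
  show "\<Union>{tens A B (f u) (g v) | u v. (u, v) \<in> D} \<subseteq> F"
  proof
    fix x assume "x \<in> \<Union>{tens A B (f u) (g v) | u v. (u, v) \<in> D}"
    then obtain u v where uv: "(u, v) \<in> D" "x \<in> tens A B (f u) (g v)" by blast
    have "(f u, g v) \<in> F" using H uv(1) by blast
    from tens_le[OF F this] uv(2) show "x \<in> F" by blast
  qed
qed

lemma prod_in:
  assumes full: "C_ideal A B (A \<times> B)" and H: "\<forall>(u, v)\<in>D. f u \<in> A \<and> g v \<in> B"
  shows "prod_hom A B f g D \<in> tensor A B"
  unfolding prod_hom_def
proof (rule fjT_in[OF full])
  have AB: "A \<times> B \<in> tensor A B" using full tensor_iff by blast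
  show "\<Union>{tens A B (f u) (g v) | u v. (u, v) \<in> D} \<subseteq> A \<times> B"
  proof
    fix x assume "x \<in> \<Union>{tens A B (f u) (g v) | u v. (u, v) \<in> D}"
    then obtain u v where uv: "(u, v) \<in> D" "x \<in> tens A B (f u) (g v)" by blast
    have "(f u, g v) \<in> A \<times> B" using H uv(1) by blast
    from tens_le[OF AB this] uv(2) show "x \<in> A \<times> B" by blast
  qed
qed


lemma fh_in: "frame_hom A B h \<Longrightarrow> a \<in> A \<Longrightarrow> h a \<in> B"
  unfolding frame_hom_def by (elim conjE) simp
lemma fh_top: "frame_hom A B h \<Longrightarrow> h (\<Union>A) = \<Union>B"
  unfolding frame_hom_def by (elim conjE) simp
lemma fh_meet: "frame_hom A B h \<Longrightarrow> a \<in> A \<Longrightarrow> b \<in> A \<Longrightarrow> h (a \<inter> b) = h a \<inter> h b"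
  unfolding frame_hom_def by (elim conjE) simp
lemma fh_join: "frame_hom A B h \<Longrightarrow> S \<subseteq> A \<Longrightarrow> h (frame_join A S) = frame_join B (h ` S)"
  unfolding frame_hom_def by (elim conjE) simp
lemma fh_mono: "frame_hom A B h \<Longrightarrow> a \<in> A \<Longrightarrow> b \<in> A \<Longrightarrow> a \<subseteq> b \<Longrightarrow> h a \<subseteq> h b"
proof -
  assume h: "frame_hom A B h" and a: "a \<in> A" and b: "b \<in> A" and ab: "a \<subseteq> b"
  have "h a = h (a \<inter> b)" using ab by (simp add: Int_absorb2)
  also have "\<dots> = h a \<inter> h b" by (rule fh_meet[OF h a b])
  finally show ?thesis by blast
qed
lemma frame_homI:
  assumes "\<And>a. a \<in> A \<Longrightarrow> h a \<in> B" "h (\<Union>A) = \<Union>B"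
    "\<And>a b. a \<in> A \<Longrightarrow> b \<in> A \<Longrightarrow> h (a \<inter> b) = h a \<inter> h b"
    "\<And>S. S \<subseteq> A \<Longrightarrow> h (frame_join A S) = frame_join B (h ` S)"
  shows "frame_hom A B h"
  unfolding frame_hom_def using assms by (intro conjI ballI allI impI) auto

definition wbs :: "'a set set \<Rightarrow> 'a set \<Rightarrow> 'a set set" where
  "wbs A a = {u \<in> A. way_below A a u}"

definition EA :: "'a set set \<Rightarrow> ('a set set \<times> 'a set) set" where
  "EA A = {(U, x). U \<in> scott_frame A \<and> x \<in> A \<and> (\<forall>u\<in>U. x \<subseteq> u)}"

lemma Wg_mem: "{{()}} \<in> Sierpinski_frame"
  by (rule ff_memI) (auto simp: fin_subsets_def)

lemma ev_hom_gen: "ev_hom A {{()}} = frame_join (tensor (scott_frame A) A) {ev_elem A \<inter> \<Union>(tensor (scott_frame A) A)}"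
proof -
  have "{\<Inter>((\<lambda>_. ev_elem A) ` K) \<inter> \<Union>(tensor (scott_frame A) A) | K. K \<in> {{()}}}
     = {ev_elem A \<inter> \<Union>(tensor (scott_frame A) A)}" by auto
  then show ?thesis unfolding ev_hom_def free_ext_def by simp
qed

lemma scott_joins_in: "\<forall>S\<subseteq>scott_frame A. frame_join (scott_frame A) S \<in> scott_frame A"
proof (intro allI impI)
  fix S assume S: "S \<subseteq> scott_frame A"
  show "frame_join (scott_frame A) S \<in> scott_frame A" using scott_join[OF S] scott_Union[OF S] by simp
qed

lemma frame_joins_in: "is_frame A \<Longrightarrow> \<forall>S\<subseteq>A. frame_join A S \<in> A"
  using fj_in by blast

lemma full_Q: "is_frame A \<Longrightarrow> C_ideal (scott_frame A) A (scott_frame A \<times> A)"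
  by (rule prod_full[OF scott_joins_in frame_joins_in])

lemma EA_ci:
  assumes fr: "is_frame A"
  shows "EA A \<in> tensor (scott_frame A) A"
  unfolding tensor_iff
proof (rule C_idealI)
  show "EA A \<subseteq> scott_frame A \<times> A" unfolding EA_def by blast
  show "(a', b') \<in> EA A" if H: "(a, b) \<in> EA A" "a' \<in> scott_frame A" "b' \<in> A" "a' \<subseteq> a" "b' \<subseteq> b" for a b a' b'
    using H unfolding EA_def by blast
  show "(frame_join (scott_frame A) S, b) \<in> EA A" if H: "S \<subseteq> scott_frame A" "b \<in> A" "\<forall>a\<in>S. (a, b) \<in> EA A" for S b
  proof -
    have "frame_join (scott_frame A) S = \<Union>S" by (rule scott_join[OF H(1)])
    moreover have "\<Union>S \<in> scott_frame A" by (rule scott_Union[OF H(1)])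
    ultimately show ?thesis using H unfolding EA_def by auto
  qed
  show "(a, frame_join A S) \<in> EA A" if H: "S \<subseteq> A" "a \<in> scott_frame A" "\<forall>b\<in>S. (a, b) \<in> EA A" for S a
  proof -
    have "\<forall>u\<in>a. frame_join A S \<subseteq> u"
    proof
      fix u assume u: "u \<in> a"
      have "u \<in> A" using u scott_sub[OF H(2)] by blast
      moreover have "\<Union>S \<subseteq> u" using H(3) u unfolding EA_def by blast
      ultimately show "frame_join A S \<subseteq> u" by (rule fj_least)
    qed
    then show ?thesis using H(2) fj_in[OF fr H(1)] unfolding EA_def by blast
  qed
qed

lemma ev_gen_mem:
  assumes fr: "is_frame A" and lc: "locally_compact A" and a: "a \<in> A"
  shows "(wbs A a, a) \<in> ev_hom A {{()}}"
proof -
  let ?T = "tensor (scott_frame A) A"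
  have ws: "wbs A a \<in> scott_frame A" unfolding wbs_def by (rule wbset_scott[OF fr lc a])
  have "(wbs A a, a) \<in> tens (scott_frame A) A (wbs A a) a" by (rule tens_mem)
  moreover have "tens (scott_frame A) A (wbs A a) a \<subseteq> ev_elem A"
    unfolding ev_elem_def wbs_def[symmetric]
    using fj_upper[of "{tens (scott_frame A) A (wbs A a) a | a. a \<in> A}" ?T] a by blast
  moreover have "(wbs A a, a) \<in> \<Union>?T"
  proof -
    have "scott_frame A \<times> A \<in> ?T" using full_Q[OF fr] tensor_iff by blast
    then show ?thesis using ws a by blast
  qed
  ultimately have "(wbs A a, a) \<in> ev_elem A \<inter> \<Union>?T" by blast
  then show ?thesis unfolding ev_hom_gen using fj_upper[of "{ev_elem A \<inter> \<Union>?T}" ?T] by blast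
qed

lemma ev_gen_le:
  assumes fr: "is_frame A" and lc: "locally_compact A"
  shows "ev_hom A {{()}} \<subseteq> EA A"
proof -
  let ?T = "tensor (scott_frame A) A"
  have E: "EA A \<in> ?T" by (rule EA_ci[OF fr])
  have "ev_elem A \<subseteq> EA A"
    unfolding ev_elem_def
  proof (rule fj_least[OF E])
    show "\<Union>{tens (scott_frame A) A {u \<in> A. way_below A a u} a | a. a \<in> A} \<subseteq> EA A"
    proof
      fix x assume "x \<in> \<Union>{tens (scott_frame A) A {u \<in> A. way_below A a u} a | a. a \<in> A}"
      then obtain a where a: "a \<in> A" "x \<in> tens (scott_frame A) A {u \<in> A. way_below A a u} a" by blast
      have "{u \<in> A. way_below A a u} \<in> scott_frame A" by (rule wbset_scott[OF fr lc a(1)])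
      moreover have "\<forall>u\<in>{u \<in> A. way_below A a u}. a \<subseteq> u" using wb_le by blast
      ultimately have "({u \<in> A. way_below A a u}, a) \<in> EA A" using a(1) unfolding EA_def by blast
      from tens_le[OF E this] a(2) show "x \<in> EA A" by blast
    qed
  qed
  then have "\<Union>{ev_elem A \<inter> \<Union>?T} \<subseteq> EA A" by blast
  then show ?thesis unfolding ev_hom_gen by (rule fj_least[OF E])
qed



locale setting =
  fixes G :: "'g set"
    and R :: "('g set set \<times> 'g set set) set"
    and OX :: "'x set set"
    and iX :: "'g set set \<Rightarrow> 'x set"
    and q :: "'x set set \<Rightarrow> 'g set set set"
  assumes pres: "presents G R OX iX"
    and lc: "locally_compact OX"
    and q_hom: "frame_hom (scott_frame OX) (scott_frame (free_frame G)) q"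
    and q_ev: "\<forall>W\<in>Sierpinski_frame.
        prod_hom (scott_frame (free_frame G)) OX q id (ev_hom OX W)
      = prod_hom (scott_frame (free_frame G)) OX id iX (ev_hom (free_frame G) W)"
begin

abbreviation "GG \<equiv> free_frame G"
abbreviation "P \<equiv> scott_frame GG"
abbreviation "Q \<equiv> scott_frame OX"

lemma frX: "is_frame OX" using pres unfolding presents_def by blast
lemma iX_hom: "frame_hom GG OX iX" using pres unfolding presents_def by blast
lemma iX_surj: "iX ` GG = OX" using pres unfolding presents_def by blast
lemma frG: "is_frame GG" by (rule ff_frame)
lemma lcG: "locally_compact GG" by (rule ff_lc)

definition "DD = prod_hom P OX q id (ev_hom OX {{()}})"

lemma DD_alt: "DD = prod_hom P OX id iX (ev_hom GG {{()}})"
  unfolding DD_def using q_ev Wg_mem by blast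

lemma DD_A: "a \<in> OX \<Longrightarrow> (q (wbs OX a), a) \<in> DD"
  unfolding DD_def using prod_gen[OF ev_gen_mem[OF frX lc], of a q id] by simp

lemma DD_B: "b \<in> GG \<Longrightarrow> (wbs GG b, iX b) \<in> DD"
  unfolding DD_alt using prod_gen[OF ev_gen_mem[OF frG lcG], of b id iX] by simp

definition "FF = {(V, y). V \<in> P \<and> y \<in> OX \<and> (\<forall>b\<in>V. y \<subseteq> iX b)}"

lemma FF_ci: "FF \<in> tensor P OX"
  unfolding tensor_iff
proof (rule C_idealI)
  show "FF \<subseteq> P \<times> OX" unfolding FF_def by blast
  show "(a', b') \<in> FF" if H: "(a, b) \<in> FF" "a' \<in> P" "b' \<in> OX" "a' \<subseteq> a" "b' \<subseteq> b" for a b a' b'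
    using H unfolding FF_def by blast
  show "(frame_join P S, b) \<in> FF" if H: "S \<subseteq> P" "b \<in> OX" "\<forall>a\<in>S. (a, b) \<in> FF" for S b
  proof -
    have "frame_join P S = \<Union>S" by (rule scott_join[OF H(1)])
    moreover have "\<Union>S \<in> P" by (rule scott_Union[OF H(1)])
    ultimately show ?thesis using H unfolding FF_def by auto
  qed
  show "(a, frame_join OX S) \<in> FF" if H: "S \<subseteq> OX" "a \<in> P" "\<forall>b\<in>S. (a, b) \<in> FF" for S a
  proof -
    have "\<forall>b\<in>a. frame_join OX S \<subseteq> iX b"
    proof
      fix b assume b: "b \<in> a"
      have "b \<in> GG" using b scott_sub[OF H(2)] by blast
      then have "iX b \<in> OX" by (rule fh_in[OF iX_hom])
      moreover have "\<Union>S \<subseteq> iX b" using H(3) b unfolding FF_def by blast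
      ultimately show "frame_join OX S \<subseteq> iX b" by (rule fj_least)
    qed
    then show ?thesis using H(2) fj_in[OF frX H(1)] unfolding FF_def by blast
  qed
qed

lemma DD_FF: "DD \<subseteq> FF"
  unfolding DD_alt
proof (rule prod_le[OF FF_ci])
  show "\<forall>(u, v)\<in>ev_hom GG {{()}}. (id u, iX v) \<in> FF"
  proof (clarify)
    fix u v assume "(u, v) \<in> ev_hom GG {{()}}"
    then have uv: "(u, v) \<in> EA GG" using ev_gen_le[OF frG lcG] by blast
    then have u: "u \<in> P" and v: "v \<in> GG" and le: "\<forall>b\<in>u. v \<subseteq> b" unfolding EA_def by auto
    have "\<forall>b\<in>u. iX v \<subseteq> iX b"
    proof
      fix b assume b: "b \<in> u"
      then have "b \<in> GG" using scott_sub[OF u] by blast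
      then show "iX v \<subseteq> iX b" using fh_mono[OF iX_hom v] le b by blast
    qed
    moreover have "iX v \<in> OX" by (rule fh_in[OF iX_hom v])
    ultimately show "(id u, iX v) \<in> FF" using u unfolding FF_def by simp
  qed
qed

definition "Fq = {(w, x). w \<in> P \<and> x \<in> OX \<and> (\<forall>U\<in>Q. x \<in> U \<longrightarrow> w \<subseteq> q U)}"

lemma q_top: "q OX = GG"
proof -
  have "q (\<Union>Q) = \<Union>P" by (rule fh_top[OF q_hom])
  then show ?thesis unfolding scott_Union_all .
qed

lemma fin_meet:
  assumes w: "w \<in> P" and fin: "finite T'" and sub: "T' \<subseteq> OX"
    and H: "\<forall>a\<in>T'. w \<subseteq> q (wbs OX a)"
  shows "OX \<inter> \<Inter>(wbs OX ` T') \<in> Q \<and> w \<subseteq> q (OX \<inter> \<Inter>(wbs OX ` T'))"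
  using fin sub H
proof (induction T' rule: finite_induct)
  case empty
  have "w \<subseteq> GG" using scott_sub[OF w] by simp
  then show ?case using scott_top q_top by simp
next
  case (insert a T')
  then have IH: "OX \<inter> \<Inter>(wbs OX ` T') \<in> Q" "w \<subseteq> q (OX \<inter> \<Inter>(wbs OX ` T'))" by auto
  have aX: "a \<in> OX" using insert.prems by simp
  have wa: "wbs OX a \<in> Q" unfolding wbs_def by (rule wbset_scott[OF frX lc aX])
  have eq: "OX \<inter> \<Inter>(wbs OX ` insert a T') = wbs OX a \<inter> (OX \<inter> \<Inter>(wbs OX ` T'))"
    unfolding wbs_def by auto
  have "wbs OX a \<inter> (OX \<inter> \<Inter>(wbs OX ` T')) \<in> Q" by (rule scott_Int[OF wa IH(1)])
  moreover have "q (wbs OX a \<inter> (OX \<inter> \<Inter>(wbs OX ` T'))) = q (wbs OX a) \<inter> q (OX \<inter> \<Inter>(wbs OX ` T'))"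
    by (rule fh_meet[OF q_hom wa IH(1)])
  moreover have "w \<subseteq> q (wbs OX a)" using insert.prems by simp
  ultimately show ?case using IH(2) eq by simp
qed

lemma Fq_ci: "Fq \<in> tensor P OX"
  unfolding tensor_iff
proof (rule C_idealI)
  show "Fq \<subseteq> P \<times> OX" unfolding Fq_def by blast
  show "(a', b') \<in> Fq" if H: "(a, b) \<in> Fq" "a' \<in> P" "b' \<in> OX" "a' \<subseteq> a" "b' \<subseteq> b" for a b a' b'
  proof -
    have "\<forall>U\<in>Q. b' \<in> U \<longrightarrow> a' \<subseteq> q U"
    proof (intro ballI impI)
      fix U assume U: "U \<in> Q" "b' \<in> U"
      have "b \<in> OX" using H(1) unfolding Fq_def by blast
      then have "b \<in> U" using scott_up[OF U(1) U(2) H(5)] by blast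
      then show "a' \<subseteq> q U" using H(1,4) U(1) unfolding Fq_def by blast
    qed
    then show ?thesis using H(2,3) unfolding Fq_def by blast
  qed
  show "(frame_join P S, b) \<in> Fq" if H: "S \<subseteq> P" "b \<in> OX" "\<forall>a\<in>S. (a, b) \<in> Fq" for S b
  proof -
    have "frame_join P S = \<Union>S" by (rule scott_join[OF H(1)])
    moreover have "\<Union>S \<in> P" by (rule scott_Union[OF H(1)])
    moreover have "\<forall>U\<in>Q. b \<in> U \<longrightarrow> \<Union>S \<subseteq> q U"
    proof (intro ballI impI)
      fix U assume U: "U \<in> Q" "b \<in> U"
      show "\<Union>S \<subseteq> q U"
      proof
        fix x assume "x \<in> \<Union>S"
        then obtain X where X: "X \<in> S" "x \<in> X" by blast
        then have "(X, b) \<in> Fq" using H(3) by blast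
        then have "X \<subseteq> q U" using U unfolding Fq_def by blast
        with X(2) show "x \<in> q U" by blast
      qed
    qed
    ultimately show ?thesis using H(2) unfolding Fq_def by simp
  qed
  show "(w, frame_join OX S) \<in> Fq" if H: "S \<subseteq> OX" "w \<in> P" "\<forall>b\<in>S. (w, b) \<in> Fq" for S w
  proof -
    have jX: "frame_join OX S \<in> OX" by (rule fj_in[OF frX H(1)])
    have "\<forall>U\<in>Q. frame_join OX S \<in> U \<longrightarrow> w \<subseteq> q U"
    proof (intro ballI impI)
      fix U assume U: "U \<in> Q" and jU: "frame_join OX S \<in> U"
      define T where "T = {a \<in> OX. \<exists>y\<in>S. way_below OX a y}"
      have TX: "T \<subseteq> OX" unfolding T_def by blast
      have "\<Union>S \<subseteq> frame_join OX T"
      proof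
        fix x assume "x \<in> \<Union>S"
        then obtain y where y: "y \<in> S" "x \<in> y" by blast
        have yX: "y \<in> OX" using y(1) H(1) by blast
        have sub: "{a \<in> OX. way_below OX a y} \<subseteq> T" unfolding T_def using y(1) by blast
        have "frame_join OX {a \<in> OX. way_below OX a y} \<subseteq> frame_join OX T" by (rule fj_mono[OF frX sub TX])
        then have "y \<subseteq> frame_join OX T" using lc_join[OF lc yX] by simp
        with y(2) show "x \<in> frame_join OX T" by blast
      qed
      then have "frame_join OX S \<subseteq> frame_join OX T" by (rule fj_least[OF fj_in[OF frX TX]])
      then have "frame_join OX T \<in> U" using scott_up[OF U jU] fj_in[OF frX TX] by blast
      from so_fin[OF frX U TX this] obtain T' where T': "T' \<subseteq> T" "finite T'" "frame_join OX T' \<in> U" by blast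
      have T'X: "T' \<subseteq> OX" using T'(1) TX by blast
      have "\<forall>a\<in>T'. w \<subseteq> q (wbs OX a)"
      proof
        fix a assume a: "a \<in> T'"
        then obtain y where y: "y \<in> S" "way_below OX a y" using T'(1) unfolding T_def by blast
        have aX: "a \<in> OX" using a T'X by blast
        have wa: "wbs OX a \<in> Q" unfolding wbs_def by (rule wbset_scott[OF frX lc aX])
        have "y \<in> wbs OX a" using y H(1) unfolding wbs_def by blast
        moreover have "(w, y) \<in> Fq" using H(3) y(1) by blast
        ultimately show "w \<subseteq> q (wbs OX a)" using wa unfolding Fq_def by blast
      qed
      from fin_meet[OF H(2) T'(2) T'X this]
      have I: "OX \<inter> \<Inter>(wbs OX ` T') \<in> Q" "w \<subseteq> q (OX \<inter> \<Inter>(wbs OX ` T'))" by auto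
      have "OX \<inter> \<Inter>(wbs OX ` T') \<subseteq> U"
      proof
        fix v assume v: "v \<in> OX \<inter> \<Inter>(wbs OX ` T')"
        then have vX: "v \<in> OX" by blast
        have "\<forall>a\<in>T'. a \<subseteq> v"
        proof
          fix a assume "a \<in> T'"
          then have "way_below OX a v" using v unfolding wbs_def by blast
          then show "a \<subseteq> v" using wb_le vX by blast
        qed
        then have "\<Union>T' \<subseteq> v" by blast
        then have "frame_join OX T' \<subseteq> v" by (rule fj_least[OF vX])
        then show "v \<in> U" using scott_up[OF U T'(3)] vX by blast
      qed
      then have "q (OX \<inter> \<Inter>(wbs OX ` T')) \<subseteq> q U" by (rule fh_mono[OF q_hom I(1) U])
      with I(2) show "w \<subseteq> q U" by blast
    qed
    then show ?thesis using H(2) jX unfolding Fq_def by blast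
  qed
qed

lemma DD_Fq: "DD \<subseteq> Fq"
  unfolding DD_def
proof (rule prod_le[OF Fq_ci])
  show "\<forall>(u, v)\<in>ev_hom OX {{()}}. (q u, id v) \<in> Fq"
  proof (clarify)
    fix u v assume "(u, v) \<in> ev_hom OX {{()}}"
    then have uv: "(u, v) \<in> EA OX" using ev_gen_le[OF frX lc] by blast
    then have u: "u \<in> Q" and v: "v \<in> OX" and le: "\<forall>b\<in>u. v \<subseteq> b" unfolding EA_def by auto
    have "\<forall>U\<in>Q. v \<in> U \<longrightarrow> q u \<subseteq> q U"
    proof (intro ballI impI)
      fix U assume U: "U \<in> Q" "v \<in> U"
      have "u \<subseteq> U"
      proof
        fix b assume b: "b \<in> u"
        then have "b \<in> OX" using scott_sub[OF u] by blast
        then show "b \<in> U" using scott_up[OF U(1) U(2)] le b by blast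
      qed
      then show "q u \<subseteq> q U" by (rule fh_mono[OF q_hom u U(1)])
    qed
    moreover have "q u \<in> P" by (rule fh_in[OF q_hom u])
    ultimately show "(q u, id v) \<in> Fq" using v unfolding Fq_def by simp
  qed
qed

end


context setting begin

lemma scott_cover:
  assumes fr: "is_frame A" and lcA: "locally_compact A" and U: "U \<in> scott_frame A"
  shows "U = \<Union>(wbs A ` U)"
proof
  show "U \<subseteq> \<Union>(wbs A ` U)"
  proof
    fix u assume u: "u \<in> U"
    then have uA: "u \<in> A" using scott_sub[OF U] by blast
    from scott_wb_ex[OF fr lcA U u] obtain a where "a \<in> U" "way_below A a u" by blast
    then show "u \<in> \<Union>(wbs A ` U)" using uA unfolding wbs_def by blast
  qed
  show "\<Union>(wbs A ` U) \<subseteq> U"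
  proof
    fix u assume "u \<in> \<Union>(wbs A ` U)"
    then obtain a where a: "a \<in> U" "u \<in> wbs A a" by blast
    then have uA: "u \<in> A" and w: "way_below A a u" unfolding wbs_def by auto
    have "a \<subseteq> u" by (rule wb_le[OF w uA])
    then show "u \<in> U" using scott_up[OF U a(1) _ uA] by blast
  qed
qed

lemma qform: assumes U: "U \<in> Q" shows "q U = {b \<in> GG. iX b \<in> U}"
proof
  show "q U \<subseteq> {b \<in> GG. iX b \<in> U}"
  proof
    fix b assume b: "b \<in> q U"
    have SQ: "wbs OX ` U \<subseteq> Q"
    proof
      fix V assume "V \<in> wbs OX ` U"
      then obtain a where a: "a \<in> U" "V = wbs OX a" by blast
      then have "a \<in> OX" using scott_sub[OF U] by blast
      then show "V \<in> Q" unfolding a(2) wbs_def by (rule wbset_scott[OF frX lc])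
    qed
    have qS: "q ` wbs OX ` U \<subseteq> P" using fh_in[OF q_hom] SQ by blast
    have "q U = q (frame_join Q (wbs OX ` U))"
      using scott_cover[OF frX lc U] scott_join[OF SQ] by simp
    also have "\<dots> = frame_join P (q ` wbs OX ` U)" by (rule fh_join[OF q_hom SQ])
    also have "\<dots> = \<Union>(q ` wbs OX ` U)" by (rule scott_join[OF qS])
    finally obtain a where a: "a \<in> U" "b \<in> q (wbs OX a)" using b by auto
    have aX: "a \<in> OX" using a(1) scott_sub[OF U] by blast
    have "(q (wbs OX a), a) \<in> FF" using DD_A[OF aX] DD_FF by blast
    then have qa: "q (wbs OX a) \<in> P" and le: "\<forall>c\<in>q (wbs OX a). a \<subseteq> iX c" unfolding FF_def by auto
    have bG: "b \<in> GG" using a(2) scott_sub[OF qa] by blast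
    have "a \<subseteq> iX b" using le a(2) by blast
    then have "iX b \<in> U" using scott_up[OF U a(1)] fh_in[OF iX_hom bG] by blast
    with bG show "b \<in> {b \<in> GG. iX b \<in> U}" by blast
  qed
  show "{b \<in> GG. iX b \<in> U} \<subseteq> q U"
  proof
    fix b assume "b \<in> {b \<in> GG. iX b \<in> U}"
    then have bG: "b \<in> GG" and bU: "iX b \<in> U" by auto
    define Sb where "Sb = {c \<in> GG. way_below GG c b}"
    have SbG: "Sb \<subseteq> GG" unfolding Sb_def by blast
    have "iX b = iX (frame_join GG Sb)" unfolding Sb_def using lc_join[OF lcG bG] by simp
    also have "\<dots> = frame_join OX (iX ` Sb)" by (rule fh_join[OF iX_hom SbG])
    finally have j: "frame_join OX (iX ` Sb) \<in> U" using bU by simp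
    have iSX: "iX ` Sb \<subseteq> OX" using fh_in[OF iX_hom] SbG by blast
    from so_fin[OF frX U iSX j] obtain S' where S': "S' \<subseteq> iX ` Sb" "finite S'" "frame_join OX S' \<in> U" by blast
    from finite_subset_image[OF S'(2) S'(1)] obtain T' where T': "T' \<subseteq> Sb" "finite T'" "S' = iX ` T'" by blast
    have T'G: "T' \<subseteq> GG" using T'(1) SbG by blast
    define c where "c = frame_join GG T'"
    have cG: "c \<in> GG" unfolding c_def by (rule fj_in[OF frG T'G])
    have "\<forall>t\<in>T'. way_below GG t b" using T'(1) unfolding Sb_def by blast
    then have wc: "way_below GG c b" unfolding c_def by (rule wb_fin_join[OF frG T'(2) T'G])
    have "iX c = frame_join OX (iX ` T')" unfolding c_def by (rule fh_join[OF iX_hom T'G])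
    then have icU: "iX c \<in> U" using S'(3) T'(3) by simp
    have "(wbs GG c, iX c) \<in> Fq" using DD_B[OF cG] DD_Fq by blast
    then have "wbs GG c \<subseteq> q U" using U icU unfolding Fq_def by blast
    moreover have "b \<in> wbs GG c" using wc bG unfolding wbs_def by blast
    ultimately show "b \<in> q U" by blast
  qed
qed

end


context setting begin

definition "sig a = frame_join GG {b \<in> GG. way_below OX (iX b) a}"
definition "ss V = {a \<in> OX. sig a \<in> V}"

lemma sig_eq: "sig a = \<Union>{b \<in> GG. way_below OX (iX b) a}"
  unfolding sig_def by (rule ff_join) blast

lemma sig_in: "sig a \<in> GG"
  unfolding sig_def by (rule fj_in[OF frG]) blast

lemma sig_iX: assumes a: "a \<in> OX" shows "iX (sig a) = a"
proof -
  have sub: "{b \<in> GG. way_below OX (iX b) a} \<subseteq> GG" by blast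
  have "iX (sig a) = frame_join OX (iX ` {b \<in> GG. way_below OX (iX b) a})"
    unfolding sig_def by (rule fh_join[OF iX_hom sub])
  also have "iX ` {b \<in> GG. way_below OX (iX b) a} = {c \<in> OX. way_below OX c a}"
  proof
    show "iX ` {b \<in> GG. way_below OX (iX b) a} \<subseteq> {c \<in> OX. way_below OX c a}"
      using fh_in[OF iX_hom] by blast
    show "{c \<in> OX. way_below OX c a} \<subseteq> iX ` {b \<in> GG. way_below OX (iX b) a}"
    proof
      fix c assume c: "c \<in> {c \<in> OX. way_below OX c a}"
      then obtain b where "b \<in> GG" "c = iX b" using iX_surj by blast
      with c show "c \<in> iX ` {b \<in> GG. way_below OX (iX b) a}" by blast
    qed
  qed
  also have "frame_join OX {c \<in> OX. way_below OX c a} = a" by (rule lc_join[OF lc a])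
  finally show ?thesis .
qed

lemma sig_mono: "a \<subseteq> a' \<Longrightarrow> sig a \<subseteq> sig a'"
  unfolding sig_eq using wb_mono_right by blast

lemma ss_scott: assumes V: "V \<in> P" shows "ss V \<in> Q"
proof (rule scottI)
  show "ss V \<subseteq> OX" unfolding ss_def by blast
  show "b \<in> ss V" if H: "a \<in> ss V" "b \<in> OX" "a \<subseteq> b" for a b
  proof -
    have "sig a \<in> V" using H(1) unfolding ss_def by blast
    moreover have "sig a \<subseteq> sig b" by (rule sig_mono[OF H(3)])
    ultimately have "sig b \<in> V" using scott_up[OF V] sig_in by blast
    with H(2) show ?thesis unfolding ss_def by blast
  qed
  show "\<exists>d\<in>D. d \<in> ss V" if D: "directed_in OX D" and j: "frame_join OX D \<in> ss V" for D
  proof -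
    have DX: "D \<subseteq> OX" and Dne: "D \<noteq> {}" and Ddir: "\<forall>x\<in>D. \<forall>y\<in>D. \<exists>z\<in>D. x \<subseteq> z \<and> y \<subseteq> z"
      using D unfolding directed_in_def by auto
    have jX: "frame_join OX D \<in> OX" by (rule fj_in[OF frX DX])
    have sD: "directed_in GG (sig ` D)"
      unfolding directed_in_def
    proof (intro conjI ballI)
      show "sig ` D \<subseteq> GG" using sig_in by blast
      show "sig ` D \<noteq> {}" using Dne by blast
    next
      fix x y assume "x \<in> sig ` D" "y \<in> sig ` D"
      then obtain dx dy where d: "dx \<in> D" "dy \<in> D" "x = sig dx" "y = sig dy" by blast
      obtain z where z: "z \<in> D" "dx \<subseteq> z" "dy \<subseteq> z" using Ddir d(1,2) by blast
      have "x \<subseteq> sig z" unfolding d(3) by (rule sig_mono[OF z(2)])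
      moreover have "y \<subseteq> sig z" unfolding d(4) by (rule sig_mono[OF z(3)])
      moreover have "sig z \<in> sig ` D" using z(1) by blast
      ultimately show "\<exists>z\<in>sig ` D. x \<subseteq> z \<and> y \<subseteq> z" by blast
    qed
    have sDG: "sig ` D \<subseteq> GG" using sig_in by blast
    have "sig (frame_join OX D) \<subseteq> \<Union>(sig ` D)"
    proof
      fix x assume "x \<in> sig (frame_join OX D)"
      then obtain b where b: "b \<in> GG" "way_below OX (iX b) (frame_join OX D)" "x \<in> b"
        unfolding sig_eq by blast
      have "iX b \<in> OX" by (rule fh_in[OF iX_hom b(1)])
      from wb_directed[OF frX lc this D b(2) jX] obtain d where "d \<in> D" "way_below OX (iX b) d" by blast
      then show "x \<in> \<Union>(sig ` D)" using b unfolding sig_eq by blast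
    qed
    moreover have "sig (frame_join OX D) \<in> V" using j unfolding ss_def by blast
    moreover have "\<Union>(sig ` D) \<in> GG" by (rule ff_union[OF sDG])
    ultimately have "\<Union>(sig ` D) \<in> V" using scott_up[OF V] by blast
    then have "frame_join GG (sig ` D) \<in> V" using ff_join[OF sDG] by simp
    from scott_dir[OF V sD this] obtain d where "d \<in> D" "sig d \<in> V" by blast
    then show ?thesis using DX unfolding ss_def by blast
  qed
qed

lemma ss_hom: "frame_hom P Q ss"
proof (rule frame_homI)
  show "ss a \<in> Q" if "a \<in> P" for a by (rule ss_scott[OF that])
  show "ss (\<Union>P) = \<Union>Q" unfolding scott_Union_all ss_def using sig_in by blast
  show "ss (a \<inter> b) = ss a \<inter> ss b" for a b unfolding ss_def by blast
  show "ss (frame_join P S) = frame_join Q (ss ` S)" if S: "S \<subseteq> P" for S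
  proof -
    have "ss ` S \<subseteq> Q" using ss_scott S by blast
    then have "frame_join Q (ss ` S) = \<Union>(ss ` S)" by (rule scott_join)
    moreover have "frame_join P S = \<Union>S" by (rule scott_join[OF S])
    ultimately show ?thesis unfolding ss_def by blast
  qed
qed

lemma ss_q: assumes U: "U \<in> Q" shows "ss (q U) = U"
  unfolding ss_def qform[OF U] using sig_in sig_iX scott_sub[OF U] by auto

lemma comp:
  assumes E: "E \<in> tensor Q OX"
  shows "prod_hom Q OX ss id (prod_hom P OX q id E) = E"
proof
  have EC: "C_ideal Q OX E" using E tensor_iff by blast
  have ES: "E \<subseteq> Q \<times> OX" by (rule ci_sub[OF EC])
  show "E \<subseteq> prod_hom Q OX ss id (prod_hom P OX q id E)"
  proof
    fix x assume x: "x \<in> E"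
    then obtain U y where Uy: "x = (U, y)" by (cases x)
    have U: "U \<in> Q" using ES x Uy by blast
    have "(q U, id y) \<in> prod_hom P OX q id E" using prod_gen x Uy by metis
    then have "(ss (q U), id (id y)) \<in> prod_hom Q OX ss id (prod_hom P OX q id E)" by (rule prod_gen)
    then show "x \<in> prod_hom Q OX ss id (prod_hom P OX q id E)" using ss_q[OF U] Uy by simp
  qed
  define K where "K = {(u, v). u \<in> P \<and> v \<in> OX \<and> (ss u, v) \<in> E}"
  have K: "K \<in> tensor P OX"
    unfolding tensor_iff
  proof (rule C_idealI)
    show "K \<subseteq> P \<times> OX" unfolding K_def by blast
    show "(a', b') \<in> K" if H: "(a, b) \<in> K" "a' \<in> P" "b' \<in> OX" "a' \<subseteq> a" "b' \<subseteq> b" for a b a' b'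
    proof -
      have a: "a \<in> P" and ab: "(ss a, b) \<in> E" using H(1) unfolding K_def by auto
      have "ss a' \<subseteq> ss a" by (rule fh_mono[OF ss_hom H(2) a H(4)])
      then have "(ss a', b') \<in> E" using ci_down[OF EC ab ss_scott[OF H(2)] H(3) _ H(5)] by blast
      then show ?thesis using H(2,3) unfolding K_def by blast
    qed
    show "(frame_join P S, b) \<in> K" if H: "S \<subseteq> P" "b \<in> OX" "\<forall>a\<in>S. (a, b) \<in> K" for S b
    proof -
      have "ss ` S \<subseteq> Q" using ss_scott H(1) by blast
      moreover have "\<forall>a\<in>ss ` S. (a, b) \<in> E" using H(3) unfolding K_def by blast
      ultimately have "(frame_join Q (ss ` S), b) \<in> E" by (rule ci_joinL[OF EC _ H(2)])
      then have "(ss (frame_join P S), b) \<in> E" using fh_join[OF ss_hom H(1)] by simp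
      moreover have "frame_join P S \<in> P" using scott_joins_in H(1) by blast
      ultimately show ?thesis using H(2) unfolding K_def by blast
    qed
    show "(a, frame_join OX S) \<in> K" if H: "S \<subseteq> OX" "a \<in> P" "\<forall>b\<in>S. (a, b) \<in> K" for S a
    proof -
      have "\<forall>b\<in>S. (ss a, b) \<in> E" using H(3) unfolding K_def by blast
      then have "(ss a, frame_join OX S) \<in> E" by (rule ci_joinR[OF EC H(1) ss_scott[OF H(2)]])
      then show ?thesis using H(2) fj_in[OF frX H(1)] unfolding K_def by blast
    qed
  qed
  have MK: "prod_hom P OX q id E \<subseteq> K"
  proof (rule prod_le[OF K])
    show "\<forall>(u, v)\<in>E. (q u, id v) \<in> K"
    proof clarify
      fix u v assume uv: "(u, v) \<in> E"
      then have u: "u \<in> Q" and v: "v \<in> OX" using ES by auto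
      show "(q u, id v) \<in> K" using uv v fh_in[OF q_hom u] ss_q[OF u] unfolding K_def by simp
    qed
  qed
  show "prod_hom Q OX ss id (prod_hom P OX q id E) \<subseteq> E"
  proof (rule prod_le[OF E])
    show "\<forall>(u, v)\<in>prod_hom P OX q id E. (ss u, id v) \<in> E"
      using MK unfolding K_def by auto
  qed
qed

lemma evW_in: "ev_hom OX W \<in> tensor Q OX"
  unfolding ev_hom_def free_ext_def
proof (rule fjT_in[OF full_Q[OF frX]])
  have "\<Union>(tensor Q OX) \<subseteq> Q \<times> OX" using ci_sub tensor_iff by blast
  then show "\<Union>{\<Inter>((\<lambda>_. ev_elem OX) ` K) \<inter> \<Union>(tensor Q OX) | K. K \<in> W} \<subseteq> Q \<times> OX" by blast
qed

lemma main:
  "\<exists>s. frame_hom P Q s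
     \<and> (\<forall>U\<in>Q. s (q U) = U)
     \<and> (\<forall>W\<in>Sierpinski_frame.
          prod_hom Q OX s id (prod_hom P OX id iX (ev_hom GG W)) = ev_hom OX W)"
proof (intro exI[of _ ss] conjI ballI)
  show "frame_hom P Q ss" by (rule ss_hom)
  show "ss (q U) = U" if "U \<in> Q" for U by (rule ss_q[OF that])
  show "prod_hom Q OX ss id (prod_hom P OX id iX (ev_hom GG W)) = ev_hom OX W"
    if W: "W \<in> Sierpinski_frame" for W
  proof -
    have "prod_hom P OX id iX (ev_hom GG W) = prod_hom P OX q id (ev_hom OX W)"
      using q_ev W by simp
    then show ?thesis using comp[OF evW_in] by simp
  qed
qed

end


theorem proposition3p2:
  fixes G :: "'g set"
    and R :: "('g set set \<times> 'g set set) set"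
    and OX :: "'x set set"
    and iX :: "'g set set \<Rightarrow> 'x set"
    and q :: "'x set set \<Rightarrow> 'g set set set"
  assumes pres: "presents G R OX iX"
    and lc: "locally_compact OX"
    and q_hom: "frame_hom (scott_frame OX) (scott_frame (free_frame G)) q"
    and q_ev: "\<forall>W\<in>Sierpinski_frame.
        prod_hom (scott_frame (free_frame G)) OX q id (ev_hom OX W)
      = prod_hom (scott_frame (free_frame G)) OX id iX (ev_hom (free_frame G) W)"
  shows "\<exists>s. frame_hom (scott_frame (free_frame G)) (scott_frame OX) s
     \<and> (\<forall>U\<in>scott_frame OX. s (q U) = U)
     \<and> (\<forall>W\<in>Sierpinski_frame.
          prod_hom (scott_frame OX) OX s id
            (prod_hom (scott_frame (free_frame G)) OX id iX (ev_hom (free_frame G) W))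
        = ev_hom OX W)"
proof -
  interpret setting G R OX iX q using assms by unfold_locales
  show ?thesis by (rule main)
qed

end
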